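(* Let $K \ge 1$ be an integer and let $\Phi \in \mathbb{R}^{M \times N}$ satisfy the restricted isometry property of order $K+1$ with isometry constant $\delta < \frac{1}{3\sqrt{K}}$. Then for any $x \in \mathbb{R}^N$ with $\|x\|_0 \le K$, Orthogonal Matching Pursuit applied to $\Phi$ and $y = \Phi x$ recovers $x$ exactly in $K$ iterations, i.e. $x^K = x$.
   Context: For $x \in \mathbb{R}^N$, $\|x\|_0 := |\mathrm{supp}(x)|$ is the number of nonzero entries. A matrix $\Phi \in \mathbb{R}^{M\times N}$ satisfies the restricted isometry property (RIP) of order $K$ with isometry constant $\delta \in (0,1)$ if $(1-\delta)\|x\|_2^2 \le \|\Phi x\|_2^2 \le (1+\delta)\|x\|_2^2$ for all $x \in \mathbb{R}^N$ with $\|x\|_0 \le K$. Orthogonal Matching Pursuit (OMP) with input $\Phi$ and $y \in \mathbb{R}^M$: initialize $r^0 = y$, $x^0 = 0$, $\Lambda^0 = \emptyset$, $\ell = 0$. Each iteration: compute $h^\ell = \Phi^T r^\ell$; set $\Lambda^{\ell+1} = \Lambda^\ell \cup \{j^*\}$ where $j^*$ is an index maximizing $|h^\ell(j)|$ (if several maxima exist, exactly one is chosen); set $x^{\ell+1} = \arg\min_{z:\, \mathrm{supp}(z) \subseteq \Lambda^{\ell+1}} \|y - \Phi z\|_2$ and $r^{\ell+1} = y - \Phi x^{\ell+1}$; increment $\ell$. The output after $\ell$ iterations is $x^\ell$. *)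

theory Defs
  imports "HOL-Analysis.Analysis"
begin

definition supp_vec :: "real^'n \<Rightarrow> 'n set" where
  "supp_vec x = {i. x $ i \<noteq> 0}"

definition l0norm :: "real^'n \<Rightarrow> nat" where
  "l0norm x = card (supp_vec x)"

definition RIP :: "real^'n^'m \<Rightarrow> nat \<Rightarrow> real \<Rightarrow> bool" where
  "RIP \<Phi> K \<delta> \<longleftrightarrow> 0 < \<delta> \<and> \<delta> < 1 \<and>
     (\<forall>x::real^'n. l0norm x \<le> K \<longrightarrow>
        (1 - \<delta>) * (norm x)\<^sup>2 \<le> (norm (\<Phi> *v x))\<^sup>2 \<and>
        (norm (\<Phi> *v x))\<^sup>2 \<le> (1 + \<delta>) * (norm x)\<^sup>2)"

text \<open>A valid run of OMP for L iterations: Lam l is the support set \<Lambda>^l,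
  xs l is the iterate x^l, the residual is r^l = y - \<Phi> x^l.
  Every admissible choice (tie-breaking of the maximizer, and of the least-squares
  minimizer) is allowed.\<close>

definition omp_run :: "real^'n^'m \<Rightarrow> real^'m \<Rightarrow> nat \<Rightarrow> (nat \<Rightarrow> 'n set) \<Rightarrow> (nat \<Rightarrow> real^'n) \<Rightarrow> bool" where
  "omp_run \<Phi> y L Lam xs \<longleftrightarrow>
     Lam 0 = {} \<and> xs 0 = 0 \<and>
     (\<forall>l<L. let h = transpose \<Phi> *v (y - \<Phi> *v xs l) in
        \<exists>j. (\<forall>i. \<bar>h $ i\<bar> \<le> \<bar>h $ j\<bar>) \<and>
            Lam (Suc l) = insert j (Lam l) \<and>
            supp_vec (xs (Suc l)) \<subseteq> Lam (Suc l) \<and>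
            (\<forall>z. supp_vec z \<subseteq> Lam (Suc l) \<longrightarrow>
                 norm (y - \<Phi> *v xs (Suc l)) \<le> norm (y - \<Phi> *v z)))"

end

theory Submission imports Defs begin

lemma adj: "inner x (transpose A *v y) = inner (A *v x) (y::real^'m)" for A :: "real^'n^'m"
  by (metis dot_lmul_matrix vector_transpose_matrix)

lemma hcomp: "(transpose A *v y) $ k = inner (A *v axis k 1) (y::real^'m)" for A :: "real^'n^'m"
  by (metis adj inner_axis mult.right_neutral inner_commute real_inner_1_right)

lemma card_supp_le:
  fixes v :: "real^'n"
  assumes "supp_vec v \<subseteq> S" shows "l0norm v \<le> card S"
  unfolding l0norm_def using assms by (simp add: card_mono)

lemma supp_axis: "supp_vec (c *\<^sub>R axis i (1::real) :: real^'n) \<subseteq> {i}"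
  unfolding supp_vec_def by (auto simp: axis_def)

lemma supp_add: "supp_vec (a + b) \<subseteq> supp_vec a \<union> supp_vec b"
  unfolding supp_vec_def by auto
lemma supp_diff: "supp_vec (a - b) \<subseteq> supp_vec a \<union> supp_vec b"
  unfolding supp_vec_def by auto
lemma supp_scale: "supp_vec (c *\<^sub>R a) \<subseteq> supp_vec a"
  unfolding supp_vec_def by auto

lemma polar: fixes u v :: "'a::real_inner"
  shows "inner (c *\<^sub>R u + v) (c *\<^sub>R u + v) - inner (c *\<^sub>R u - v) (c *\<^sub>R u - v) = 4 * c * inner u v"
proof -
  have h: "inner v u = inner u v" by (rule inner_commute)
  show ?thesis unfolding inner_add_left inner_add_right inner_diff_left inner_diff_right inner_scaleR_left inner_scaleR_right h
    by (simp add: algebra_simps)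
qed

lemma rip_inner:
  fixes \<Phi> :: "real^'n^'m" and a :: "real^'n"
  assumes rip: "RIP \<Phi> (K+1) \<delta>" and sa: "supp_vec a \<subseteq> T" and cT: "card T \<le> K" and iT: "i \<notin> T"
  shows "\<bar>inner (\<Phi> *v axis i 1) (\<Phi> *v a)\<bar> \<le> \<delta> * norm a"
proof -
  define c where "c = norm a"
  define e where "e = (axis i 1 :: real^'n)"
  have ea: "inner e a = 0"
  proof -
    have "a $ i = 0" using sa iT unfolding supp_vec_def by auto
    thus ?thesis unfolding e_def by (simp add: inner_axis')
  qed
  have ne: "norm e = 1" unfolding e_def by simp
  have fin: "finite T" by simp
  have cT1: "card (insert i T) \<le> K + 1" using cT iT fin by simp
  have sp: "supp_vec (c *\<^sub>R e + a) \<subseteq> insert i T" "supp_vec (c *\<^sub>R e - a) \<subseteq> insert i T"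
    using supp_add[of "c *\<^sub>R e" a] supp_diff[of "c *\<^sub>R e" a] supp_axis[of c i] sa unfolding e_def by auto
  have l0: "l0norm (c *\<^sub>R e + a) \<le> K+1" "l0norm (c *\<^sub>R e - a) \<le> K+1"
    using card_supp_le[OF sp(1)] card_supp_le[OF sp(2)] cT1 by auto
  have ee: "inner e e = 1" using ne by (simp add: power2_norm_eq_inner[symmetric])
  have aa: "inner a a = c\<^sup>2" unfolding c_def by (simp add: power2_norm_eq_inner)
  have n1: "(norm (c *\<^sub>R e + a))\<^sup>2 = 2 * c\<^sup>2" "(norm (c *\<^sub>R e - a))\<^sup>2 = 2 * c\<^sup>2"
    unfolding power2_norm_eq_inner using ea ee aa
    by (auto simp: inner_add_left inner_add_right inner_diff_left inner_diff_right inner_commute power2_eq_square)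
  have R: "(norm (\<Phi> *v (c *\<^sub>R e + a)))\<^sup>2 \<le> (1+\<delta>) * (2*c\<^sup>2)" "(1-\<delta>) * (2*c\<^sup>2) \<le> (norm (\<Phi> *v (c *\<^sub>R e + a)))\<^sup>2"
       "(norm (\<Phi> *v (c *\<^sub>R e - a)))\<^sup>2 \<le> (1+\<delta>) * (2*c\<^sup>2)" "(1-\<delta>) * (2*c\<^sup>2) \<le> (norm (\<Phi> *v (c *\<^sub>R e - a)))\<^sup>2"
    using rip l0 n1 unfolding RIP_def by metis+
  define p where "p = inner (\<Phi> *v e) (\<Phi> *v a)"
  have lin1: "\<Phi> *v (c *\<^sub>R e + a) = c *\<^sub>R (\<Phi> *v e) + \<Phi> *v a"
    by (simp add: matrix_vector_right_distrib matrix_vector_mult_scaleR)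
  have lin2: "\<Phi> *v (c *\<^sub>R e - a) = c *\<^sub>R (\<Phi> *v e) - \<Phi> *v a"
    by (simp add: matrix_vector_mult_diff_distrib matrix_vector_mult_scaleR)
  have pe: "inner (c *\<^sub>R (\<Phi> *v e) + \<Phi> *v a) (c *\<^sub>R (\<Phi> *v e) + \<Phi> *v a)
     - inner (c *\<^sub>R (\<Phi> *v e) - \<Phi> *v a) (c *\<^sub>R (\<Phi> *v e) - \<Phi> *v a) = 4 * c * p"
    unfolding p_def by (rule polar)
  have "(norm (\<Phi> *v (c *\<^sub>R e + a)))\<^sup>2 - (norm (\<Phi> *v (c *\<^sub>R e - a)))\<^sup>2 = 4 * c * p"
    unfolding lin1 lin2 power2_norm_eq_inner using pe .
  define N1 where "N1 = (norm (\<Phi> *v (c *\<^sub>R e + a)))\<^sup>2"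
  define N2 where "N2 = (norm (\<Phi> *v (c *\<^sub>R e - a)))\<^sup>2"
  define q where "q = \<delta> * c\<^sup>2"
  define cc where "cc = c\<^sup>2"
  have E1: "(1+\<delta>) * (2*c\<^sup>2) = 2*cc + 2*q" unfolding q_def cc_def by (simp add: algebra_simps)
  have E2: "(1-\<delta>) * (2*c\<^sup>2) = 2*cc - 2*q" unfolding q_def cc_def by (simp add: algebra_simps)
  have F: "N1 \<le> 2*cc + 2*q" "2*cc - 2*q \<le> N1" "N2 \<le> 2*cc + 2*q" "2*cc - 2*q \<le> N2"
    using R unfolding E1 E2 N1_def N2_def by auto
  have "N1 - N2 = 4 * c * p" unfolding N1_def N2_def by fact
  with F have "4 * c * p \<le> 4 * q" "- (4 * q) \<le> 4 * c * p" by linarith+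
  then have "4 * c * p \<le> 4 * (\<delta> * c\<^sup>2)" "- (4 * (\<delta> * c\<^sup>2)) \<le> 4 * c * p" unfolding q_def .
  hence A: "c * p \<le> c * (\<delta> * c)" "c * (- (\<delta> * c)) \<le> c * p" by (simp_all add: power2_eq_square mult_ac)
  have c0: "c \<ge> 0" unfolding c_def by simp
  show ?thesis
  proof (cases "c = 0")
    case True then have "a = 0" unfolding c_def by simp
    then show ?thesis by simp
  next
    case False
    with c0 have "c > 0" by simp
    have "p \<le> \<delta> * c" using A(1) \<open>c > 0\<close> by (simp add: mult_le_cancel_left)
    moreover have "- (\<delta> * c) \<le> p" using mult_le_cancel_left_pos[OF \<open>c > 0\<close>, of "- (\<delta> * c)" p] A(2) by simp
    ultimately have "p \<le> \<delta> * c" "- (\<delta> * c) \<le> p" by auto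
    then show ?thesis unfolding p_def e_def c_def by (simp add: abs_le_iff)
  qed
qed


lemma orth:
  fixes \<Phi> :: "real^'n^'m" and y :: "real^'m"
  assumes min: "\<forall>z. supp_vec z \<subseteq> S \<longrightarrow> norm (y - \<Phi> *v xl) \<le> norm (y - \<Phi> *v z)"
    and sx: "supp_vec xl \<subseteq> S" and k: "k \<in> S"
  shows "(transpose \<Phi> *v (y - \<Phi> *v xl)) $ k = 0"
proof -
  define r where "r = y - \<Phi> *v xl"
  define a where "a = \<Phi> *v axis k 1"
  define cc where "cc = inner a r"
  define q where "q = inner a a"
  have q0: "q \<ge> 0" unfolding q_def by simp
  define t where "t = cc / (q + 1)"
  define z where "z = xl + t *\<^sub>R axis k 1"
  have "supp_vec z \<subseteq> S" unfolding z_def using supp_add[of xl "t *\<^sub>R axis k 1"] supp_axis[of t k] sx k by auto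
  with min have "norm r \<le> norm (y - \<Phi> *v z)" unfolding r_def by auto
  moreover have "y - \<Phi> *v z = r - t *\<^sub>R a" unfolding z_def r_def a_def
    by (simp add: matrix_vector_right_distrib matrix_vector_mult_scaleR)
  ultimately have "norm r \<le> norm (r - t *\<^sub>R a)" by simp
  hence "(norm r)\<^sup>2 \<le> (norm (r - t *\<^sub>R a))\<^sup>2" by (simp add: power_mono)
  hence "inner r r \<le> inner (r - t *\<^sub>R a) (r - t *\<^sub>R a)" by (simp add: power2_norm_eq_inner)
  also have "\<dots> = inner r r - 2 * t * cc + t * t * q"
    unfolding cc_def q_def inner_diff_left inner_diff_right inner_scaleR_left inner_scaleR_right
    by (simp add: inner_commute[of r a] algebra_simps)
  finally have "0 \<le> t * t * q - 2 * t * cc" by simp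
  hence "0 \<le> (q+1)^2 * (t * t * q - 2 * t * cc)" by simp
  also have "\<dots> = cc * cc * q - 2 * cc * cc * (q + 1)"
  proof -
    have tq: "t * (q + 1) = cc" unfolding t_def using q0 by simp
    show ?thesis unfolding tq[symmetric] by (simp add: power2_eq_square algebra_simps)
  qed
  also have "\<dots> = - (cc * cc) * (q + 2)" by (simp add: algebra_simps)
  finally have "cc * cc * (q+2) \<le> 0" by simp
  moreover have "cc * cc \<ge> 0" by simp
  ultimately have "cc * cc = 0" using q0
    by (metis add_nonneg_pos mult_le_0_iff linorder_not_le order_antisym zero_less_numeral)
  hence "cc = 0" by simp
  thus ?thesis unfolding cc_def a_def r_def hcomp .

qed


lemma contra_arith:
  fixes \<delta> n A H S1 Kr :: real
  assumes "0 < n" "(1-\<delta>) * n\<^sup>2 \<le> A" "A \<le> H * S1" "H \<le> \<delta> * n" "S1\<^sup>2 \<le> Kr * n\<^sup>2"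
    "0 \<le> S1" "0 < \<delta>" "\<delta> < 1/3" "\<delta>\<^sup>2 * Kr < 1/9" "0 \<le> H"
  shows False
proof -
  have "H * S1 \<le> \<delta> * n * S1" using assms by (simp add: mult_right_mono)
  hence "(1-\<delta>) * n * n \<le> (\<delta> * S1) * n" using assms by (simp add: power2_eq_square algebra_simps)
  hence a: "(1-\<delta>) * n \<le> \<delta> * S1" using assms(1) by (simp add: mult_le_cancel_right)
  have "0 \<le> (1-\<delta>) * n" using assms by simp
  hence "((1-\<delta>) * n)\<^sup>2 \<le> (\<delta> * S1)\<^sup>2" using a by (simp add: power_mono)
  also have "\<dots> = \<delta>\<^sup>2 * S1\<^sup>2" by (simp add: power_mult_distrib)
  also have "\<dots> \<le> \<delta>\<^sup>2 * (Kr * n\<^sup>2)" using assms by (simp add: mult_left_mono)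
  finally have "(1-\<delta>)\<^sup>2 * n\<^sup>2 \<le> (\<delta>\<^sup>2 * Kr) * n\<^sup>2" by (simp add: power_mult_distrib mult_ac)
  hence b: "(1-\<delta>)\<^sup>2 \<le> \<delta>\<^sup>2 * Kr" using assms(1) by (simp add: mult_le_cancel_right)
  have "2/3 < 1 - \<delta>" using assms by simp
  hence "(2/3)\<^sup>2 < (1-\<delta>)\<^sup>2" by (rule power_strict_mono) auto
  with b assms(9) show False by (simp add: power2_eq_square)
qed

theorem theorem1:
  fixes \<Phi> :: "real^'n^'m" and x :: "real^'n" and K :: nat and \<delta> :: real
    and Lam :: "nat \<Rightarrow> 'n set" and xs :: "nat \<Rightarrow> real^'n"
  assumes "K \<ge> 1"
    and "RIP \<Phi> (K + 1) \<delta>"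
    and "\<delta> < 1 / (3 * sqrt (real K))"
    and "l0norm x \<le> K"
    and "omp_run \<Phi> (\<Phi> *v x) K Lam xs"
  shows "xs K = x"
proof -
  note K1 = assms(1) and rip = assms(2)
  define y where "y = \<Phi> *v x"
  define T where "T = supp_vec x"
  have cT: "card T \<le> K" using assms(4) unfolding T_def l0norm_def .
  have d0: "0 < \<delta>" and d1: "\<delta> < 1" using rip unfolding RIP_def by auto
  have ripv: "\<And>v. l0norm v \<le> K + 1 \<Longrightarrow> (1 - \<delta>) * (norm v)\<^sup>2 \<le> (norm (\<Phi> *v v))\<^sup>2"
    using rip unfolding RIP_def by blast
  have L0: "Lam 0 = {}" and X0: "xs 0 = 0" using assms(5) unfolding omp_run_def by auto
  have ST: "\<exists>j. (\<forall>i. \<bar>(transpose \<Phi> *v (y - \<Phi> *v xs l)) $ i\<bar> \<le> \<bar>(transpose \<Phi> *v (y - \<Phi> *v xs l)) $ j\<bar>) \<and>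
            Lam (Suc l) = insert j (Lam l) \<and>
            supp_vec (xs (Suc l)) \<subseteq> Lam (Suc l) \<and>
            (\<forall>z. supp_vec z \<subseteq> Lam (Suc l) \<longrightarrow>
                 norm (y - \<Phi> *v xs (Suc l)) \<le> norm (y - \<Phi> *v z))" if "l < K" for l
    using assms(5) that unfolding omp_run_def y_def Let_def by blast
  have suppxs: "supp_vec (xs l) \<subseteq> Lam l" if "l \<le> K" for l
  proof (cases l)
    case 0 then show ?thesis using X0 by (simp add: supp_vec_def)
  next
    case (Suc l') then show ?thesis using ST[of l'] that by auto
  qed
  have minl: "\<forall>z. supp_vec z \<subseteq> Lam l \<longrightarrow> norm (y - \<Phi> *v xs l) \<le> norm (y - \<Phi> *v z)"
    if lh: "l \<le> K" "l \<ge> 1" for l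
  proof -
    obtain l' where l: "l = Suc l'" using lh by (cases l) auto
    show ?thesis using ST[of l'] lh unfolding l by auto
  qed
  have orthl: "(transpose \<Phi> *v (y - \<Phi> *v xs l)) $ k = 0" if "l \<le> K" "k \<in> Lam l" for l k
  proof (cases l)
    case 0 then show ?thesis using that L0 by simp
  next
    case (Suc l')
    show ?thesis by (rule orth[OF minl suppxs that(2)]) (use that Suc in auto)
  qed
  have sK: "sqrt (real K) \<ge> 1" using K1 by simp
  have d3: "\<delta> < 1/3"
  proof -
    have "1 / (3 * sqrt (real K)) \<le> 1/3" using sK by (simp add: field_simps)
    thus ?thesis using assms(3) by simp
  qed
  have d9: "\<delta>\<^sup>2 * real K < 1/9"
  proof -
    have "\<delta> * (3 * sqrt (real K)) < 1" using assms(3) sK by (simp add: field_simps)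
    hence "(\<delta> * (3 * sqrt (real K)))\<^sup>2 < 1\<^sup>2" using d0 sK by (intro power_strict_mono) auto
    thus ?thesis by (simp add: power_mult_distrib)
  qed
  have inv: "(Lam l \<subseteq> T \<and> card (Lam l) = l) \<or> T \<subseteq> Lam l" if "l \<le> K" for l
    using that
  proof (induction l)
    case 0 then show ?case using L0 by simp
  next
    case (Suc l)
    hence lK: "l < K" by simp
    obtain j where j: "\<forall>i. \<bar>(transpose \<Phi> *v (y - \<Phi> *v xs l)) $ i\<bar> \<le> \<bar>(transpose \<Phi> *v (y - \<Phi> *v xs l)) $ j\<bar>"
      and LS: "Lam (Suc l) = insert j (Lam l)" using ST[OF lK] by blast
    from Suc.IH lK consider (a) "Lam l \<subseteq> T" "card (Lam l) = l" | (b) "T \<subseteq> Lam l" by fastforce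
    then show ?case
    proof cases
      case b then show ?thesis using LS by auto
    next
      case a
      define u where "u = x - xs l"
      have su: "supp_vec u \<subseteq> T" unfolding u_def
        using supp_diff[of x "xs l"] suppxs[of l] lK a unfolding T_def by auto
      show ?thesis
      proof (cases "u = 0")
        case True
        then have "xs l = x" unfolding u_def by simp
        then have "T \<subseteq> Lam l" using suppxs[of l] lK unfolding T_def by auto
        then show ?thesis using LS by auto
      next
        case False
        define r where "r = y - \<Phi> *v xs l"
        define h where "h = transpose \<Phi> *v r"
        have ru: "r = \<Phi> *v u" unfolding r_def y_def u_def by (simp add: matrix_vector_mult_diff_distrib)
        have nu: "norm u > 0" using False by simp
        have l0u: "l0norm u \<le> K + 1" using card_supp_le[OF su] cT by simp
        have nr: "(1-\<delta>) * (norm u)\<^sup>2 \<le> (norm r)\<^sup>2" using ripv[OF l0u] ru by simp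
        have nrpos: "(norm r)\<^sup>2 > 0"
        proof -
          have "(1-\<delta>) * (norm u)\<^sup>2 > 0" using d1 nu by simp
          thus ?thesis using nr by linarith
        qed
        have rr: "(norm r)\<^sup>2 = inner u h" unfolding h_def adj power2_norm_eq_inner ru ..
        have uT: "inner u h = (\<Sum>k\<in>T. u $ k * h $ k)"
        proof -
          have "inner u h = (\<Sum>k\<in>UNIV. u $ k * h $ k)" by (simp add: inner_vec_def)
          also have "\<dots> = (\<Sum>k\<in>T. u $ k * h $ k)"
            by (rule sum.mono_neutral_right) (use su in \<open>auto simp: supp_vec_def\<close>)
          finally show ?thesis .
        qed
        define H where "H = \<bar>h $ j\<bar>"
        have hj: "\<And>k. \<bar>h $ k\<bar> \<le> H" using j unfolding H_def h_def r_def by blast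
        define S1 where "S1 = (\<Sum>k\<in>T. \<bar>u $ k\<bar>)"
        have AH: "inner u h \<le> H * S1"
        proof -
          have "inner u h \<le> (\<Sum>k\<in>T. \<bar>u $ k\<bar> * H)" unfolding uT
          proof (rule sum_mono)
            fix k
            have "u $ k * h $ k \<le> \<bar>u $ k\<bar> * \<bar>h $ k\<bar>" by (metis abs_ge_self abs_mult)
            also have "\<dots> \<le> \<bar>u $ k\<bar> * H" using hj[of k] by (simp add: mult_left_mono)
            finally show "u $ k * h $ k \<le> \<bar>u $ k\<bar> * H" .
          qed
          thus ?thesis unfolding S1_def by (simp add: sum_distrib_left mult.commute)
        qed
        have S1sq: "S1\<^sup>2 \<le> real K * (norm u)\<^sup>2"
        proof -
          have "S1\<^sup>2 \<le> (\<Sum>k\<in>T. \<bar>u $ k\<bar>\<^sup>2) * card T" unfolding S1_def by (rule sum_squared_le_sum_of_squares)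
          also have "(\<Sum>k\<in>T. \<bar>u $ k\<bar>\<^sup>2) \<le> (\<Sum>k\<in>UNIV. (u $ k)\<^sup>2)"
            unfolding power2_abs by (rule sum_mono2) auto
          also have "(\<Sum>k\<in>UNIV. (u $ k)\<^sup>2) = (norm u)\<^sup>2"
            unfolding power2_norm_eq_inner inner_vec_def by (simp add: power2_eq_square)
          finally have "S1\<^sup>2 \<le> (norm u)\<^sup>2 * card T" by (simp add: mult_right_mono)
          also have "\<dots> \<le> (norm u)\<^sup>2 * K" using cT by (simp add: mult_left_mono)
          finally show ?thesis by (simp add: mult.commute)
        qed
        have Hpos: "H > 0"
        proof (rule ccontr)
          assume "\<not> H > 0"
          have "h $ k = 0" for k using hj[of k] \<open>\<not> H > 0\<close> by linarith
          hence "h = 0" by (simp add: vec_eq_iff)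
          hence "inner u h = 0" by simp
          thus False using nrpos rr by simp
        qed
        have jL: "j \<notin> Lam l"
        proof
          assume "j \<in> Lam l"
          hence "h $ j = 0" using orthl[of l j] lK unfolding h_def r_def by simp
          thus False using Hpos unfolding H_def by simp
        qed
        have jT: "j \<in> T"
        proof (rule ccontr)
          assume jn: "j \<notin> T"
          have Hle: "H \<le> \<delta> * norm u" unfolding H_def h_def hcomp ru
            by (rule rip_inner[OF rip su cT jn])
          have S0: "0 \<le> S1" unfolding S1_def by (simp add: sum_nonneg)
          have AH': "(norm r)\<^sup>2 \<le> H * S1" using AH rr by simp
          show False
            using contra_arith[OF nu nr AH' Hle S1sq S0 d0 d3 d9] Hpos by simp
        qed
        have "Lam (Suc l) \<subseteq> T" using LS a jT by auto
        moreover have "card (Lam (Suc l)) = Suc l" using LS a jL by simp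
        ultimately show ?thesis by simp
      qed
    qed
  qed
  have TK: "T \<subseteq> Lam K"
  proof -
    from inv[of K] consider (a) "Lam K \<subseteq> T" "card (Lam K) = K" | (b) "T \<subseteq> Lam K" by auto
    then show ?thesis
    proof cases
      case a
      have "card T \<ge> card (Lam K)" using a(1) by (simp add: card_mono)
      hence "Lam K = T" using a cT by (intro card_subset_eq) auto
      then show ?thesis by simp
    qed
  qed
  have cLK: "card (Lam K) \<le> K"
  proof -
    have "card (Lam l) \<le> l" if "l \<le> K" for l
      using that
    proof (induction l)
      case 0 then show ?case using L0 by simp
    next
      case (Suc l)
      then obtain j where "Lam (Suc l) = insert j (Lam l)" using ST[of l] by auto
      then show ?case using Suc by (simp add: card_insert_if)
    qed
    thus ?thesis by simp
  qed
  define w where "w = x - xs K"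
  have sw: "supp_vec w \<subseteq> Lam K" unfolding w_def
    using supp_diff[of x "xs K"] suppxs[of K] TK unfolding T_def by auto
  have "norm (y - \<Phi> *v xs K) \<le> norm (y - \<Phi> *v x)"
    using minl[of K] K1 TK unfolding T_def by auto
  hence "\<Phi> *v w = 0" unfolding w_def y_def by (simp add: matrix_vector_mult_diff_distrib)
  moreover have "l0norm w \<le> K + 1" using card_supp_le[OF sw] cLK by simp
  ultimately have "(1 - \<delta>) * (norm w)\<^sup>2 \<le> 0" using ripv by fastforce
  hence "w = 0" using d1 by (simp add: mult_le_0_iff)
  thus ?thesis unfolding w_def by simp
qed

end
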